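(* Let $C_{\min}=\min_l C_l$, and run Algorithm 3 (see context) on an arbitrary sequence of packet arrivals. Then: (i) the resulting $\{X_{mk}\}$ is feasible for $\textbf{Schedule}$, i.e. capacities $C_l$ are never exceeded; (ii) the resulting $\{\alpha_m\},\{\beta_{lt}\}$ (final values) are feasible for $\textbf{Dual}$; (iii) there is a constant $B<\infty$, depending on $L$ but not on $C_{\min}$, such that $$\Gamma_{opt}\le\Big(2(1+\ln L)+\frac{B}{C_{\min}}\Big)\sum_{m,k}X_{mk}.$$ Consequently, Algorithm 3 is $(1,\,2(1+\ln L))$-competitive in the limit $C_{\min}\to\infty$.
   Context: Network model. The network is a directed graph with a finite set $\mathcal L$ of links. Each link $l$ has an integer capacity $C_l\ge1$ (packets per time slot). Time is slotted, $t=1,2,\dots$. $\mathcal M$ is a finite set of packets. Packet $m$ has a source node $s_m$, a destination node $\mathrm{dst}_m$, an arrival slot $a_m$ and a deadline slot $f_m$. Valid schedules. A valid schedule for $m$ is a set $k=\{(l_1,t_1),\dots,(l_j,t_j)\}$ of (link, slot) pairs satisfying two conditions: $l_1,\dots,l_j$ form a directed path from $s_m$ to $\mathrm{dst}_m$, and $a_m\le t_1<t_2<\dots<t_j\le f_m$. $V(m)$ denotes the set of valid schedules of $m$. $L\ge1$ is an integer with $|k|\le L$ for all $m\in\mathcal M$, $k\in V(m)$. $\textbf{Schedule}(R)$ is the LP: maximize $\sum_{m,k\in V(m)}X_{mk}$ subject to three constraints: - $\sum_{k\in V(m)}X_{mk}\le1$ for all $m$; - $\sum_{m,k:(l,t)\in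 k}X_{mk}\le RC_l$ for all $l,t$; - $X_{mk}\ge0$. $\textbf{Schedule}$ is $\textbf{Schedule}(1)$, and $\Gamma_{opt}$ denotes its optimal value. $\textbf{Dual}$ is the LP: minimize $\sum_m\alpha_m+\sum_{l,t}C_l\beta_{lt}$ subject to three constraints: - $\alpha_m+\sum_{(l,t)\in k}\beta_{lt}\ge1$ for all $m$ and $k\in V(m)$; - $\alpha_m\ge0$; - $\beta_{lt}\ge0$. Competitive ratio. An online policy $\eta$ is $(R,\rho)$-competitive if $\Gamma_{opt}/\Gamma_\eta(R)\le\rho$ for every arrival sequence, where $\Gamma_\eta(R)$ is the number of packets $\eta$ delivers with capacities $RC_l$. Define the function $$g_L(x)=\begin{cases}\dfrac{e^{x}-1}{L\,(e^{1/(\ln L+1)}-1)}, & 0\le x\le \frac{1}{\ln L+1},\\[2mm] e^{(x-1)(\ln L+1)}, & x\ge\frac{1}{\ln L+1}.\end{cases}$$ Algorithm 3. 1. Initialize all $\alpha_m,X_{mk}$ to $0$. For each link $l$ and slot $t$, let $n_{lt}$ be the number of packets scheduled so far on $(l,t)$ (initially $0$), and maintain $\beta_{lt}=g_L(n_{lt}/C_l)$ (initially $0$). 2. For each arriving packet $m$ in order: - Let $k^*\in\arg\max_{k\in V(m)}\big(1-\sum_{(l,t)\in k}\beta_{lt}\big)$. - If $1-\sum_{(l,t)\in k^*}\beta_{lt}>0$, do the following. Set $\alpha_m=1-\sum_{(l,t)\in k^*}\beta_{lt}$, using current values. For each $(l,t)\in k^*$ increment $n_{lt}$ by one and reset $\beta_{lt}=g_L(n_{lt}/C_l)$.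 Set $X_{mk^*}=1$, and transmit $m$ along $k^*$. - Otherwise, drop $m$. *)

theory Defs
  imports Complex_Main
begin

record net =
  links :: "nat set"
  cap :: "nat \<Rightarrow> nat"
  lk_tail :: "nat \<Rightarrow> nat"
  lk_head :: "nat \<Rightarrow> nat"

record pkts =
  src :: "nat \<Rightarrow> nat"
  dst :: "nat \<Rightarrow> nat"
  arr :: "nat \<Rightarrow> nat"
  dl :: "nat \<Rightarrow> nat"

fun is_walk :: "net \<Rightarrow> nat \<Rightarrow> nat \<Rightarrow> nat list \<Rightarrow> bool" where
  "is_walk N s d [] = (s = d)"
| "is_walk N s d (l # ls) =
     (l \<in> links N \<and> lk_tail N l = s \<and> is_walk N (lk_head N l) d ls)"

definition is_path :: "net \<Rightarrow> nat \<Rightarrow> nat \<Rightarrow> nat list \<Rightarrow> bool" where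
  "is_path N s d ls \<longleftrightarrow> is_walk N s d ls \<and> distinct (s # map (lk_head N) ls)"

definition V :: "net \<Rightarrow> pkts \<Rightarrow> nat \<Rightarrow> (nat \<times> nat) set set" where
  "V N P m = {k. \<exists>ps. set ps = k \<and> is_path N (src P m) (dst P m) (map fst ps)
                  \<and> sorted_wrt (<) (map snd ps)
                  \<and> (\<forall>p\<in>set ps. arr P m \<le> snd p \<and> snd p \<le> dl P m)}"

text \<open>LP Schedule(R) over the packet set M; X(m,k) is the LP variable X_{mk}
  (variables outside m \<in> M, k \<in> V(m) are forced to be 0).\<close>

definition sched_feasible ::
  "net \<Rightarrow> pkts \<Rightarrow> nat set \<Rightarrow> real \<Rightarrow> (nat \<times> (nat \<times> nat) set \<Rightarrow> real) \<Rightarrow> bool" where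
  "sched_feasible N P M R X \<longleftrightarrow>
     (\<forall>m k. X (m, k) \<noteq> 0 \<longrightarrow> m \<in> M \<and> k \<in> V N P m) \<and>
     (\<forall>m k. 0 \<le> X (m, k)) \<and>
     (\<forall>m\<in>M. (\<Sum>k\<in>V N P m. X (m, k)) \<le> 1) \<and>
     (\<forall>l\<in>links N. \<forall>t. (\<Sum>m\<in>M. \<Sum>k\<in>{k \<in> V N P m. (l, t) \<in> k}. X (m, k))
                          \<le> R * real (cap N l))"

definition sched_obj :: "net \<Rightarrow> pkts \<Rightarrow> nat set \<Rightarrow> (nat \<times> (nat \<times> nat) set \<Rightarrow> real) \<Rightarrow> real" where
  "sched_obj N P M X = (\<Sum>m\<in>M. \<Sum>k\<in>V N P m. X (m, k))"

definition Gamma_opt :: "net \<Rightarrow> pkts \<Rightarrow> nat set \<Rightarrow> real" where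
  "Gamma_opt N P M = Sup (sched_obj N P M ` {X. sched_feasible N P M 1 X})"

definition dual_feasible ::
  "net \<Rightarrow> pkts \<Rightarrow> nat set \<Rightarrow> (nat \<Rightarrow> real) \<Rightarrow> (nat \<Rightarrow> nat \<Rightarrow> real) \<Rightarrow> bool" where
  "dual_feasible N P M \<alpha> \<beta> \<longleftrightarrow>
     (\<forall>m\<in>M. \<forall>k\<in>V N P m. 1 \<le> \<alpha> m + (\<Sum>(l, t)\<in>k. \<beta> l t)) \<and>
     (\<forall>m\<in>M. 0 \<le> \<alpha> m) \<and>
     (\<forall>l\<in>links N. \<forall>t. 0 \<le> \<beta> l t)"

definition gL :: "nat \<Rightarrow> real \<Rightarrow> real" where
  "gL L x = (if x \<le> 1 / (ln (real L) + 1)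
             then (exp x - 1) / (real L * (exp (1 / (ln (real L) + 1)) - 1))
             else exp ((x - 1) * (ln (real L) + 1)))"

definition beta_of :: "net \<Rightarrow> nat \<Rightarrow> (nat \<Rightarrow> nat \<Rightarrow> nat) \<Rightarrow> nat \<Rightarrow> nat \<Rightarrow> real" where
  "beta_of N L n l t = gL L (real (n l t) / real (cap N l))"

definition price :: "net \<Rightarrow> nat \<Rightarrow> (nat \<Rightarrow> nat \<Rightarrow> nat) \<Rightarrow> (nat \<times> nat) set \<Rightarrow> real" where
  "price N L n k = (\<Sum>(l, t)\<in>k. beta_of N L n l t)"

text \<open>Algorithm 3, as a relation: alg3 N P L ms n alpha X holds iff processing the
  packets ms in order (with arbitrary tie-breaking in the argmax) can end in the
  state where n are the counters n_lt, alpha the dual variables alpha_m and X the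
  primal variables X_mk; the final beta_lt is beta_of N L n l t.\<close>

inductive alg3 :: "net \<Rightarrow> pkts \<Rightarrow> nat \<Rightarrow> nat list \<Rightarrow> (nat \<Rightarrow> nat \<Rightarrow> nat) \<Rightarrow> (nat \<Rightarrow> real)
                   \<Rightarrow> (nat \<times> (nat \<times> nat) set \<Rightarrow> real) \<Rightarrow> bool"
  for N :: net and P :: pkts and L :: nat where
  init: "alg3 N P L [] (\<lambda>_ _. 0) (\<lambda>_. 0) (\<lambda>_. 0)"
| accept: "\<lbrakk> alg3 N P L ms n \<alpha> X; k \<in> V N P m;
             \<forall>k'\<in>V N P m. 1 - price N L n k' \<le> 1 - price N L n k;
             1 - price N L n k > 0 \<rbrakk>
           \<Longrightarrow> alg3 N P L (ms @ [m]) (\<lambda>l t. if (l, t) \<in> k then Suc (n l t) else n l t)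
                 (\<alpha>(m := 1 - price N L n k)) (X((m, k) := 1))"
| drop: "\<lbrakk> alg3 N P L ms n \<alpha> X; \<forall>k\<in>V N P m. 1 - price N L n k \<le> 0 \<rbrakk>
           \<Longrightarrow> alg3 N P L (ms @ [m]) n \<alpha> X"

definition Cmin :: "net \<Rightarrow> nat" where
  "Cmin N = Min (cap N ` links N)"

end

theory Submission
  imports Defs
begin

lemma exp_sub1_le: "0 \<le> (y::real) \<Longrightarrow> exp y - 1 \<le> y + y^2 * exp y"
proof -
  assume y: "0 \<le> y"
  have "1 - y \<le> exp (-y)" using exp_ge_add_one_self[of "-y"] by simp
  hence "exp y * (1 - y) \<le> exp y * exp (-y)" by (simp add: mult_left_mono)
  hence e1: "exp y - 1 \<le> y * exp y" by (simp add: exp_minus algebra_simps)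
  have "y * (exp y - 1) \<le> y * (y * exp y)" using e1 y by (simp add: mult_left_mono)
  thus ?thesis using e1 by (simp add: power2_eq_square algebra_simps)
qed

lemma a_ge1: "1 \<le> L \<Longrightarrow> 1 \<le> ln (real L) + 1" by simp

lemma gL_facts:
  fixes L :: nat
  assumes L: "1 \<le> L"
  defines "a \<equiv> ln (real L) + 1"
  defines "x0 \<equiv> 1 / a"
  defines "c0 \<equiv> 1 / (real L * (exp x0 - 1))"
  shows "1 \<le> a" "0 < x0" "x0 \<le> 1" "0 < c0" "c0 \<le> a / real L"
    "c0 * (exp x0 - 1) = 1 / real L" "exp ((x0 - 1) * a) = 1 / real L"
    "\<And>x. x \<le> x0 \<Longrightarrow> gL L x = c0 * (exp x - 1)"
    "\<And>x. x0 < x \<Longrightarrow> gL L x = exp ((x - 1) * a)"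
proof -
  show a1: "1 \<le> a" using L by (simp add: a_def)
  show x0p: "0 < x0" using a1 by (simp add: x0_def)
  show "x0 \<le> 1" using a1 by (simp add: x0_def)
  have Lp: "0 < real L" using L by simp
  have ex: "x0 \<le> exp x0 - 1" using exp_ge_add_one_self[of x0] by linarith
  hence ep: "0 < exp x0 - 1" using x0p by linarith
  show "0 < c0" using Lp ep by (simp add: c0_def)
  have "real L * x0 \<le> real L * (exp x0 - 1)" using ex Lp by simp
  hence "1 / (real L * (exp x0 - 1)) \<le> 1 / (real L * x0)"
    using Lp x0p by (intro divide_left_mono) auto
  also have "1 / (real L * x0) = a / real L" using a1 by (simp add: x0_def)
  finally show "c0 \<le> a / real L" by (simp add: c0_def)
  show "c0 * (exp x0 - 1) = 1 / real L" using ep Lp by (simp add: c0_def)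
  have "(x0 - 1) * a = - ln (real L)" using a1 by (simp add: x0_def a_def algebra_simps)
  thus "exp ((x0 - 1) * a) = 1 / real L" using Lp by (simp add: exp_minus inverse_eq_divide)
  show "\<And>x. x \<le> x0 \<Longrightarrow> gL L x = c0 * (exp x - 1)"
    by (simp add: gL_def c0_def x0_def a_def)
  show "\<And>x. x0 < x \<Longrightarrow> gL L x = exp ((x - 1) * a)"
    by (simp add: gL_def x0_def a_def)
qed

lemma gL_nonneg: assumes L: "1 \<le> L" and x: "0 \<le> x" shows "0 \<le> gL L x"
proof -
  note F = gL_facts[OF L]
  show ?thesis
  proof (cases "x \<le> 1 / (ln (real L) + 1)")
    case True
    then show ?thesis using F(4,8) x by (simp add: mult_nonneg_nonneg)
  next
    case False
    then show ?thesis using F(9) by simp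
  qed
qed

lemma gL_zero: "1 \<le> L \<Longrightarrow> gL L 0 = 0"
  using gL_facts(2,8)[of L] by simp

lemma gL_mono: assumes L: "1 \<le> L" and x: "0 \<le> x" and xy: "x \<le> y" shows "gL L x \<le> gL L y"
proof -
  note F = gL_facts[OF L]
  define a where "a = ln (real L) + 1"
  define x0 where "x0 = 1 / a"
  define c0 where "c0 = 1 / (real L * (exp x0 - 1))"
  note F = F[folded a_def, folded x0_def, folded c0_def]
  show ?thesis
  proof (cases "y \<le> x0")
    case True
    then show ?thesis using F(4,8) xy by (simp add: mult_left_mono)
  next
    case ny: False
    show ?thesis
    proof (cases "x0 < x")
      case True
      then show ?thesis using F(1,9) xy ny by (simp add: mult_right_mono)
    next
      case False
      hence "gL L x \<le> c0 * (exp x0 - 1)" using F(4,8) by (simp add: mult_left_mono)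
      also have "\<dots> = exp ((x0 - 1) * a)" using F(6,7) by simp
      also have "\<dots> \<le> gL L y" using F(1,9) ny by (simp add: mult_right_mono)
      finally show ?thesis .
    qed
  qed
qed

lemma gL_ge1: assumes L: "1 \<le> L" and x: "1 \<le> x" shows "1 \<le> gL L x"
proof -
  define a where "a = ln (real L) + 1"
  define x0 where "x0 = 1 / a"
  define c0 where "c0 = 1 / (real L * (exp x0 - 1))"
  note F = gL_facts[OF L, folded a_def, folded x0_def, folded c0_def]
  show ?thesis
  proof (cases "x0 < x")
    case True
    then show ?thesis using F(1,9) x by simp
  next
    case False
    hence "x = 1" "x0 = 1" using F(3) x by auto
    hence "a = 1" using F(1) by (simp add: x0_def)
    hence "ln (real L) = 0" by (simp add: a_def)
    hence "L = 1" using L by simp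
    thus ?thesis using F(6,8) \<open>x = 1\<close> \<open>x0 = 1\<close> by simp
  qed
qed

lemma g1step:
  fixes a c0 x h L :: real
  assumes a: "1 \<le> a" and c0: "0 < c0" "c0 \<le> a / L" and L: "1 \<le> L"
    and x: "0 \<le> x" and h: "0 \<le> h" and xh: "x + h \<le> 1"
  shows "c0 * (exp (x + h) - 1) - c0 * (exp x - 1)
         \<le> h * (a * (c0 * (exp x - 1)) + a / L) + h^2 * (a * exp 1)"
proof -
  have eq: "c0 * (exp (x + h) - 1) - c0 * (exp x - 1) = c0 * exp x * (exp h - 1)"
    by (simp add: exp_add algebra_simps)
  have "exp h - 1 \<le> h + h^2 * exp h" using exp_sub1_le[OF h] .
  hence "c0 * exp x * (exp h - 1) \<le> c0 * exp x * (h + h^2 * exp h)"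
    using c0 by (intro mult_left_mono) auto
  also have "\<dots> = h * (c0 * (exp x - 1)) + h * c0 + h^2 * (c0 * exp (x + h))"
    by (simp add: exp_add algebra_simps)
  also have "\<dots> \<le> h * (a * (c0 * (exp x - 1))) + h * (a / L) + h^2 * (a * exp 1)"
  proof -
    have g0: "0 \<le> c0 * (exp x - 1)" using c0 x by simp
    have t1: "h * (c0 * (exp x - 1)) \<le> h * (a * (c0 * (exp x - 1)))"
      using g0 a h by (intro mult_left_mono) (auto simp: mult_le_cancel_right1)
    have t2: "h * c0 \<le> h * (a / L)" using c0 h by (intro mult_left_mono) auto
    have "a / L \<le> a" using a L by (simp add: divide_le_eq)
    hence "c0 \<le> a" using c0 by linarith
    moreover have "exp (x + h) \<le> exp 1" using xh by simp
    ultimately have "c0 * exp (x + h) \<le> a * exp 1" using c0 by (intro mult_mono) auto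
    hence t3: "h^2 * (c0 * exp (x + h)) \<le> h^2 * (a * exp 1)" by (intro mult_left_mono) auto
    show ?thesis using t1 t2 t3 by linarith
  qed
  finally have fin: "c0 * exp x * (exp h - 1) \<le> h * (a * (c0 * (exp x - 1))) + h * (a / L) + h^2 * (a * exp 1)" .
  have "h * (a * (c0 * (exp x - 1)) + a / L) = h * (a * (c0 * (exp x - 1))) + h * (a / L)"
    by (simp add: distrib_left)
  thus ?thesis using fin eq by linarith
qed

lemma g2step:
  fixes a y h :: real
  assumes a: "1 \<le> a" and y: "0 \<le> y" and h: "0 \<le> h" and yh: "y + h \<le> 1"
  shows "exp ((y + h - 1) * a) - exp ((y - 1) * a)
         \<le> h * (a * exp ((y - 1) * a)) + h^2 * (a^2 * exp a)"
proof -
  define E where "E = exp ((y - 1) * a)"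
  have E0: "0 < E" "E \<le> 1" using a yh h by (auto simp: E_def mult_nonpos_nonneg)
  have eq: "exp ((y + h - 1) * a) - exp ((y - 1) * a) = E * (exp (a * h) - 1)"
    by (simp add: E_def exp_add[symmetric] algebra_simps)
  have ah: "0 \<le> a * h" using a h by simp
  have "exp (a * h) - 1 \<le> a * h + (a * h)^2 * exp (a * h)" using exp_sub1_le[OF ah] .
  hence "E * (exp (a * h) - 1) \<le> E * (a * h + (a * h)^2 * exp (a * h))"
    using E0 by (intro mult_left_mono) auto
  also have "\<dots> = h * (a * E) + h^2 * (a^2 * (E * exp (a * h)))"
    by (simp add: power_mult_distrib algebra_simps)
  also have "\<dots> \<le> h * (a * E) + h^2 * (a^2 * exp a)"
  proof -
    have "h \<le> 1" using y yh by linarith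
    hence "a * h \<le> a" using a by (simp add: mult_left_le)
    hence "exp (a * h) \<le> exp a" by simp
    hence Ee: "E * exp (a * h) \<le> exp a" using E0
      by (metis exp_gt_zero less_eq_real_def mult_left_le_one_le order_trans)
    have "a^2 * (E * exp (a * h)) \<le> a^2 * exp a" using mult_left_mono[OF Ee, of "a^2"] by simp
    hence "h^2 * (a^2 * (E * exp (a * h))) \<le> h^2 * (a^2 * exp a)"
      using mult_left_mono[of _ _ "h^2"] by simp
    thus ?thesis by simp
  qed
  finally show ?thesis using eq by (simp add: E_def)
qed

definition KL :: "nat \<Rightarrow> real" where
  "KL L = (ln (real L) + 1)^2 * exp (ln (real L) + 1) + (ln (real L) + 1) * exp 1"

lemma gL_step:
  assumes L: "1 \<le> L" and x: "0 \<le> x" and h: "0 \<le> h" and xh: "x + h \<le> 1"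
  shows "gL L (x + h) - gL L x
     \<le> h * ((ln (real L) + 1) * gL L x + (ln (real L) + 1) / real L) + h^2 * KL L"
proof -
  define a where "a = ln (real L) + 1"
  define x0 where "x0 = 1 / a"
  define c0 where "c0 = 1 / (real L * (exp x0 - 1))"
  note F = gL_facts[OF L, folded a_def, folded x0_def, folded c0_def]
  have K: "KL L = a^2 * exp a + a * exp 1" by (simp add: KL_def a_def)
  have Lr: "1 \<le> real L" using L by simp
  have K1: "0 \<le> a * exp 1" "0 \<le> a^2 * exp a" using F(1) by auto
  have gx0: "0 \<le> gL L x" using gL_nonneg[OF L x] .
  show ?thesis unfolding K a_def[symmetric]
  proof (cases "x + h \<le> x0")
    case True
    have "gL L (x + h) - gL L x = c0 * (exp (x + h) - 1) - c0 * (exp x - 1)"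
      using F(8) True h by simp
    also have "\<dots> \<le> h * (a * (c0 * (exp x - 1)) + a / L) + h^2 * (a * exp 1)"
      using g1step[OF F(1) F(4) F(5) Lr x h xh] .
    also have "\<dots> \<le> h * (a * gL L x + a / L) + h^2 * (a^2 * exp a + a * exp 1)"
      using F(8) True h K1 by (simp add: mult_left_mono)
    finally show "gL L (x + h) - gL L x \<le> h * (a * gL L x + a / real L) + h\<^sup>2 * (a\<^sup>2 * exp a + a * exp 1)" .
  next
    case nt: False
    show "gL L (x + h) - gL L x \<le> h * (a * gL L x + a / real L) + h\<^sup>2 * (a\<^sup>2 * exp a + a * exp 1)"
    proof (cases "x0 < x")
      case True
      have "gL L (x + h) - gL L x = exp ((x + h - 1) * a) - exp ((x - 1) * a)"
        using F(9) True nt by simp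
      also have "\<dots> \<le> h * (a * exp ((x - 1) * a)) + h^2 * (a^2 * exp a)"
        using g2step[OF F(1) x h xh] .
      also have "\<dots> \<le> h * (a * gL L x + a / L) + h^2 * (a^2 * exp a + a * exp 1)"
      proof -
        have "0 \<le> h * (a / L)" using h F(1) Lr by simp
        moreover have "0 \<le> h^2 * (a * exp 1)" using K1 by simp
        ultimately show ?thesis using F(9) True by (simp add: distrib_left)
      qed
      finally show ?thesis .
    next
      case False
      define h1 where "h1 = x0 - x"
      define h2 where "h2 = x + h - x0"
      have h1: "0 \<le> h1" and h2: "0 \<le> h2" using False nt by (auto simp: h1_def h2_def)
      have hh: "h = h1 + h2" by (simp add: h1_def h2_def)
      have e1: "gL L (x + h) = exp ((x0 + h2 - 1) * a)" using F(9) nt by (simp add: h2_def)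
      have e2: "gL L x = c0 * (exp x - 1)" using F(8) False by simp
      have s2: "exp ((x0 + h2 - 1) * a) - exp ((x0 - 1) * a)
         \<le> h2 * (a * exp ((x0 - 1) * a)) + h2^2 * (a^2 * exp a)"
        using g2step[OF F(1) less_imp_le[OF F(2)] h2] xh by (simp add: h2_def)
      have s1: "c0 * (exp (x + h1) - 1) - c0 * (exp x - 1)
         \<le> h1 * (a * (c0 * (exp x - 1)) + a / L) + h1^2 * (a * exp 1)"
        using g1step[OF F(1) F(4) F(5) Lr x h1] F(3) by (simp add: h1_def)
      have mid: "exp ((x0 - 1) * a) = c0 * (exp (x + h1) - 1)"
        using F(6,7) by (simp add: h1_def)
      have "gL L (x + h) - gL L x
          \<le> h2 * (a * (1 / real L)) + h2^2 * (a^2 * exp a)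
             + h1 * (a * gL L x + a / L) + h1^2 * (a * exp 1)"
        using s1 s2 e1 e2 mid F(7) by simp
      also have "\<dots> \<le> h * (a * gL L x + a / L) + h^2 * (a^2 * exp a + a * exp 1)"
      proof -
        have "h2 * (a * (1 / real L)) \<le> h2 * (a * gL L x + a / L)"
          using h2 gx0 F(1) by (intro mult_left_mono) auto
        moreover have "h2^2 * (a^2 * exp a) \<le> h^2 * (a^2 * exp a)"
          using h1 h2 hh K1 by (intro mult_right_mono) (auto simp: power_mono)
        moreover have "h1^2 * (a * exp 1) \<le> h^2 * (a * exp 1)"
          using h1 h2 hh K1 by (intro mult_right_mono) (auto simp: power_mono)
        moreover have "h2 * (a * gL L x + a / L) + h1 * (a * gL L x + a / L) = h * (a * gL L x + a / L)"
          using hh by (simp add: algebra_simps add_divide_distrib)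
        moreover have "h^2 * (a^2 * exp a) + h^2 * (a * exp 1) = h^2 * (a^2 * exp a + a * exp 1)"
          by (simp add: algebra_simps)
        ultimately show ?thesis by linarith
      qed
      finally show ?thesis .
    qed
  qed
qed

lemma term_bound:
  fixes C n cm :: real
  assumes L: "1 \<le> L" and C: "1 \<le> C" and n: "0 \<le> n" and nC: "n + 1 \<le> C"
    and cm: "0 < cm" "cm \<le> C"
  shows "C * (gL L ((n + 1) / C) - gL L (n / C))
     \<le> (ln (real L) + 1) * gL L (n / C) + (ln (real L) + 1) / real L + KL L / cm"
proof -
  define a where "a = ln (real L) + 1"
  have Cp: "0 < C" using C by simp
  have x: "0 \<le> n / C" using n Cp by simp
  have h: "0 \<le> 1 / C" using Cp by simp
  have xh: "n / C + 1 / C \<le> 1" using nC Cp by (simp add: add_divide_distrib[symmetric] divide_le_eq)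
  have st: "gL L (n / C + 1 / C) - gL L (n / C)
     \<le> 1 / C * (a * gL L (n / C) + a / real L) + (1 / C)^2 * KL L"
    using gL_step[OF L x h xh] by (simp add: a_def)
  have eq: "(n + 1) / C = n / C + 1 / C" by (simp add: add_divide_distrib)
  have "C * (gL L ((n + 1) / C) - gL L (n / C))
      \<le> C * (1 / C * (a * gL L (n / C) + a / real L) + (1 / C)^2 * KL L)"
    using st eq Cp by (simp add: mult_left_mono)
  also have "\<dots> = a * gL L (n / C) + a / real L + KL L / C"
    using Cp by (simp add: field_simps power2_eq_square)
  also have "KL L / C \<le> KL L / cm"
  proof -
    have "0 \<le> KL L" using L by (simp add: KL_def)
    thus ?thesis using cm by (simp add: divide_left_mono)
  qed
  finally show ?thesis by (simp add: a_def)
qed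

lemma walk_links: "is_walk N s d ls \<Longrightarrow> set ls \<subseteq> links N"
  by (induction ls arbitrary: s) auto

lemma V_sub: "k \<in> V N P m \<Longrightarrow> k \<subseteq> links N \<times> {arr P m..dl P m}"
proof
  fix p assume k: "k \<in> V N P m" and p: "p \<in> k"
  then obtain ps where ps: "set ps = k" "is_path N (src P m) (dst P m) (map fst ps)"
     "\<forall>p\<in>set ps. arr P m \<le> snd p \<and> snd p \<le> dl P m"
    unfolding V_def by blast
  have "set (map fst ps) \<subseteq> links N" using ps(2) walk_links unfolding is_path_def by blast
  thus "p \<in> links N \<times> {arr P m..dl P m}" using p ps(1,3) by (cases p) force
qed

lemma V_finite: "finite (links N) \<Longrightarrow> finite (V N P m)"
  by (rule finite_subset[of _ "Pow (links N \<times> {arr P m..dl P m})"]) (auto dest: V_sub)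

lemma V_elem_finite: "k \<in> V N P m \<Longrightarrow> finite k"
  unfolding V_def by auto

lemma inv_X: "alg3 N P L ms n \<alpha> X \<Longrightarrow> X (q, k) = 0 \<or> (X (q, k) = 1 \<and> q \<in> set ms \<and> k \<in> V N P q)"
  by (induction rule: alg3.induct) auto

lemma inv_alpha0: "alg3 N P L ms n \<alpha> X \<Longrightarrow> q \<notin> set ms \<Longrightarrow> \<alpha> q = 0"
  by (induction rule: alg3.induct) auto

lemma inv_sum1: "alg3 N P L ms n \<alpha> X \<Longrightarrow> distinct ms \<Longrightarrow> finite (links N)
   \<Longrightarrow> (\<Sum>k\<in>V N P q. X (q, k)) \<le> 1"
proof (induction arbitrary: q rule: alg3.induct)
  case init
  then show ?case by simp
next
  case (accept ms n \<alpha> X k m)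
  show ?case
  proof (cases "q = m")
    case True
    have m: "m \<notin> set ms" using accept.prems by simp
    have "\<And>k'. X (m, k') = 0" using inv_X[OF accept.hyps(1)] m by blast
    hence "(\<Sum>k'\<in>V N P q. (X((m, k) := 1)) (q, k')) = (\<Sum>k'\<in>V N P m. if k' = k then 1 else 0)"
      using True by (intro sum.cong) auto
    also have "\<dots> = 1" using V_finite[OF accept.prems(2)] accept.hyps(2) by simp
    finally show ?thesis by simp
  next
    case False
    then show ?thesis using accept by simp
  qed
next
  case (drop ms n \<alpha> X m)
  then show ?case by simp
qed

lemma inv_n: "alg3 N P L ms n \<alpha> X \<Longrightarrow> distinct ms \<Longrightarrow> finite (links N)
   \<Longrightarrow> real (n l t) = (\<Sum>q\<in>set ms. \<Sum>k\<in>{k \<in> V N P q. (l, t) \<in> k}. X (q, k))"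
proof (induction rule: alg3.induct)
  case init
  then show ?case by simp
next
  case (accept ms n \<alpha> X k m)
  have m: "m \<notin> set ms" and d: "distinct ms" using accept.prems by auto
  have X0: "\<And>k'. X (m, k') = 0" using inv_X[OF accept.hyps(1)] m by blast
  have fin: "finite {k' \<in> V N P m. (l, t) \<in> k'}" using V_finite[OF accept.prems(2)] by simp
  have "(\<Sum>k'\<in>{k' \<in> V N P m. (l, t) \<in> k'}. (X((m, k) := 1)) (m, k'))
      = (\<Sum>k'\<in>{k' \<in> V N P m. (l, t) \<in> k'}. if k' = k then 1 else 0)"
    using X0 by (intro sum.cong) auto
  also have "\<dots> = (if (l, t) \<in> k then 1 else 0)" using fin accept.hyps(2) by simp
  finally have A: "(\<Sum>k'\<in>{k' \<in> V N P m. (l, t) \<in> k'}. (X((m, k) := 1)) (m, k'))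
      = (if (l, t) \<in> k then 1 else 0)" .
  have B: "(\<Sum>q\<in>set ms. \<Sum>k'\<in>{k' \<in> V N P q. (l, t) \<in> k'}. (X((m, k) := 1)) (q, k'))
      = (\<Sum>q\<in>set ms. \<Sum>k'\<in>{k' \<in> V N P q. (l, t) \<in> k'}. X (q, k'))"
    using m by (intro sum.cong) auto
  show ?case using A B m accept.IH[OF d accept.prems(2)] by simp
next
  case (drop ms n \<alpha> X m)
  have m: "m \<notin> set ms" and d: "distinct ms" using drop.prems by auto
  have X0: "\<And>k'. X (m, k') = 0" using inv_X[OF drop.hyps(1)] m by blast
  show ?case using X0 m drop.IH[OF d drop.prems(2)] by simp
qed

lemma beta_nonneg: "1 \<le> L \<Longrightarrow> 0 \<le> beta_of N L n l t"
  unfolding beta_of_def by (rule gL_nonneg) auto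

lemma price_nonneg: "1 \<le> L \<Longrightarrow> 0 \<le> price N L n k"
  unfolding price_def by (rule sum_nonneg) (auto simp: beta_nonneg)

lemma beta_le_price: "1 \<le> L \<Longrightarrow> finite k \<Longrightarrow> (l, t) \<in> k \<Longrightarrow> beta_of N L n l t \<le> price N L n k"
  unfolding price_def
  using member_le_sum[of "(l,t)" k "\<lambda>(l, t). beta_of N L n l t"] by (auto simp: beta_nonneg)

lemma price_mono: "1 \<le> L \<Longrightarrow> (\<And>l t. n l t \<le> n' l t) \<Longrightarrow> price N L n k \<le> price N L n' k"
  unfolding price_def beta_of_def
  by (intro sum_mono) (auto intro!: gL_mono divide_right_mono)

lemma n_lt_cap:
  assumes L: "1 \<le> L" and k: "k \<in> V N P m" and p: "price N L n k < 1" and lt: "(l, t) \<in> k"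
    and c: "1 \<le> cap N l"
  shows "n l t < cap N l"
proof (rule ccontr)
  assume "\<not> n l t < cap N l"
  hence "real (cap N l) \<le> real (n l t)" by simp
  hence "1 \<le> real (n l t) / real (cap N l)" using c by simp
  hence "1 \<le> beta_of N L n l t" unfolding beta_of_def by (rule gL_ge1[OF L])
  also have "\<dots> \<le> price N L n k" using beta_le_price[OF L V_elem_finite[OF k] lt] .
  finally show False using p by simp
qed

lemma inv_cap: "alg3 N P L ms n \<alpha> X \<Longrightarrow> 1 \<le> L \<Longrightarrow> (\<forall>l\<in>links N. 1 \<le> cap N l)
   \<Longrightarrow> l \<in> links N \<Longrightarrow> n l t \<le> cap N l"
proof (induction rule: alg3.induct)
  case init
  then show ?case by simp
next
  case (accept ms n \<alpha> X k m)
  show ?case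
  proof (cases "(l, t) \<in> k")
    case True
    have "n l t < cap N l"
      using n_lt_cap[OF accept.prems(1) accept.hyps(2) _ True] accept.hyps(4) accept.prems by auto
    then show ?thesis using True by simp
  next
    case False
    then show ?thesis using accept by simp
  qed
next
  case (drop ms n \<alpha> X m)
  then show ?case by simp
qed

lemma inv_dual: "alg3 N P L ms n \<alpha> X \<Longrightarrow> 1 \<le> L \<Longrightarrow> distinct ms
   \<Longrightarrow> \<forall>q\<in>set ms. 0 \<le> \<alpha> q \<and> (\<forall>k\<in>V N P q. 1 \<le> \<alpha> q + price N L n k)"
proof (induction rule: alg3.induct)
  case init
  then show ?case by simp
next
  case (accept ms n \<alpha> X k m)
  define n' where "n' = (\<lambda>l t. if (l, t) \<in> k then Suc (n l t) else n l t)"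
  have mono: "\<And>k'. price N L n k' \<le> price N L n' k'"
    using price_mono[OF accept.prems(1)] unfolding n'_def by auto
  have m: "m \<notin> set ms" and d: "distinct ms" using accept.prems by auto
  have IH: "\<forall>q\<in>set ms. 0 \<le> \<alpha> q \<and> (\<forall>k\<in>V N P q. 1 \<le> \<alpha> q + price N L n k)"
    using accept.IH[OF accept.prems(1) d] .
  have "\<forall>q\<in>set (ms @ [m]). 0 \<le> (\<alpha>(m := 1 - price N L n k)) q
      \<and> (\<forall>k'\<in>V N P q. 1 \<le> (\<alpha>(m := 1 - price N L n k)) q + price N L n' k')"
  proof
    fix q assume q: "q \<in> set (ms @ [m])"
    show "0 \<le> (\<alpha>(m := 1 - price N L n k)) q
      \<and> (\<forall>k'\<in>V N P q. 1 \<le> (\<alpha>(m := 1 - price N L n k)) q + price N L n' k')"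
    proof (cases "q = m")
      case True
      show ?thesis using True accept.hyps(3,4) mono by (auto intro: order_trans)
    next
      case False
      hence "q \<in> set ms" using q by simp
      then show ?thesis using IH False mono by (fastforce intro: order_trans add_left_mono)
    qed
  qed
  then show ?case unfolding n'_def .
next
  case (drop ms n \<alpha> X m)
  have m: "m \<notin> set ms" and d: "distinct ms" using drop.prems by auto
  have "\<alpha> m = 0" using inv_alpha0[OF drop.hyps(1) m] .
  then show ?case using drop.IH[OF drop.prems(1) d] drop.hyps(2) by auto
qed

lemma inv_pot:
  "alg3 N P L ms n \<alpha> X \<Longrightarrow> 1 \<le> L \<Longrightarrow> distinct ms \<Longrightarrow> finite (links N)
   \<Longrightarrow> (\<forall>l\<in>links N. 1 \<le> cap N l) \<Longrightarrow> 0 < cm \<Longrightarrow> (\<forall>l\<in>links N. cm \<le> real (cap N l))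
   \<Longrightarrow> (\<forall>q\<in>set ms. \<forall>k\<in>V N P q. card k \<le> L) \<Longrightarrow> finite S
   \<Longrightarrow> (\<forall>q\<in>set ms. \<forall>k\<in>V N P q. k \<subseteq> S)
   \<Longrightarrow> (\<Sum>q\<in>set ms. \<alpha> q) + (\<Sum>(l, t)\<in>S. real (cap N l) * beta_of N L n l t)
      \<le> (2 * (1 + ln (real L)) + real L * KL L / cm) * sched_obj N P (set ms) X"
proof (induction rule: alg3.induct)
  case init
  then show ?case by (simp add: beta_of_def gL_zero sched_obj_def)
next
  case (accept ms n \<alpha> X k m)
  define a where "a = ln (real L) + 1"
  define R where "R = 2 * (1 + ln (real L)) + real L * KL L / cm"
  define n' where "n' = (\<lambda>l t. if (l, t) \<in> k then Suc (n l t) else n l t)"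
  define f where "f = (\<lambda>n (l, t). real (cap N l) * beta_of N L n l t)"
  define p where "p = price N L n k"
  have L: "1 \<le> L" using accept.prems by simp
  have m: "m \<notin> set ms" and d: "distinct ms" using accept.prems by auto
  have IH: "(\<Sum>q\<in>set ms. \<alpha> q) + sum (f n) S \<le> R * sched_obj N P (set ms) X"
    using accept.IH[OF L d accept.prems(3-6)] accept.prems(7-9)
    unfolding f_def R_def by (simp add: case_prod_unfold)
  have kS: "k \<subseteq> S" using accept.prems(9) accept.hyps(2) by simp
  have kfin: "finite k" using V_elem_finite[OF accept.hyps(2)] .
  have ksub: "k \<subseteq> links N \<times> {arr P m..dl P m}" using V_sub[OF accept.hyps(2)] .
  have cardk: "card k \<le> L" using accept.prems(7) accept.hyps(2) by simp
  have p1: "p < 1" and p0: "0 \<le> p" using accept.hyps(4) price_nonneg[OF L] by (auto simp: p_def)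
  have a1: "1 \<le> a" using L by (simp add: a_def)
  have S1: "sum (f n') S = sum (f n) S + sum (\<lambda>x. f n' x - f n x) k"
  proof -
    have "sum (\<lambda>x. f n' x - f n x) S = sum (\<lambda>x. f n' x - f n x) k"
      using kS accept.prems(8) by (intro sum.mono_neutral_right) (auto simp: f_def n'_def beta_of_def)
    moreover have "sum (f n') S = sum (f n) S + sum (\<lambda>x. f n' x - f n x) S"
      by (simp add: sum_subtractf)
    ultimately show ?thesis by simp
  qed
  have tb: "f n' x - f n x \<le> a * (case x of (l, t) \<Rightarrow> beta_of N L n l t) + a / real L + KL L / cm"
    if x: "x \<in> k" for x
  proof -
    obtain l t where xe: "x = (l, t)" by (cases x)
    have lN: "l \<in> links N" using ksub x xe by auto
    have c1: "1 \<le> cap N l" and cmc: "cm \<le> real (cap N l)" using lN accept.prems by auto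
    have lt: "n l t < cap N l" using n_lt_cap[OF L accept.hyps(2) _ _ c1] p1 x xe by (simp add: p_def)
    have "real (n l t) + 1 \<le> real (cap N l)" using lt by linarith
    from term_bound[OF L _ _ this accept.prems(5) cmc] c1
    have "real (cap N l) * (gL L ((real (n l t) + 1) / real (cap N l)) - gL L (real (n l t) / real (cap N l)))
      \<le> a * gL L (real (n l t) / real (cap N l)) + a / real L + KL L / cm" by (simp add: a_def)
    thus ?thesis using x xe by (simp add: f_def n'_def beta_of_def right_diff_distrib add.commute)
  qed
  have S2: "sum (\<lambda>x. f n' x - f n x) k \<le> a * p + real (card k) * (a / real L + KL L / cm)"
  proof -
    have "sum (\<lambda>x. f n' x - f n x) k
       \<le> sum (\<lambda>x. a * (case x of (l, t) \<Rightarrow> beta_of N L n l t) + (a / real L + KL L / cm)) k"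
      using tb by (intro sum_mono) (simp add: add.assoc)
    also have "\<dots> = a * p + real (card k) * (a / real L + KL L / cm)"
      by (simp add: sum.distrib sum_distrib_left[symmetric] p_def price_def)
    finally show ?thesis .
  qed
  have S3: "real (card k) * (a / real L + KL L / cm) \<le> a + real L * KL L / cm"
  proof -
    have ck: "real (card k) \<le> real L" using cardk by simp
    have K0: "0 \<le> KL L / cm" using accept.prems(5) L by (simp add: KL_def)
    have "real (card k) * (a / real L) \<le> real L * (a / real L)"
      using ck a1 by (intro mult_right_mono) auto
    also have "\<dots> = a" using L by simp
    finally have A: "real (card k) * (a / real L) \<le> a" .
    have B: "real (card k) * (KL L / cm) \<le> real L * (KL L / cm)"
      using ck K0 by (intro mult_right_mono) auto
    show ?thesis using A B by (simp add: distrib_left)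
  qed
  have Al: "(\<Sum>q\<in>set (ms @ [m]). (\<alpha>(m := 1 - p)) q) = (1 - p) + (\<Sum>q\<in>set ms. \<alpha> q)"
  proof -
    have "(\<Sum>q\<in>set ms. (\<alpha>(m := 1 - p)) q) = (\<Sum>q\<in>set ms. \<alpha> q)"
      using m by (intro sum.cong) auto
    thus ?thesis using m by simp
  qed
  have Ob: "sched_obj N P (set (ms @ [m])) (X((m, k) := 1)) = 1 + sched_obj N P (set ms) X"
  proof -
    have X0: "\<And>k'. X (m, k') = 0" using inv_X[OF accept.hyps(1)] m by blast
    have "(\<Sum>k'\<in>V N P m. (X((m, k) := 1)) (m, k')) = (\<Sum>k'\<in>V N P m. if k' = k then 1 else 0)"
      using X0 by (intro sum.cong) auto
    also have "\<dots> = 1" using V_finite[OF accept.prems(3)] accept.hyps(2) by simp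
    finally have A: "(\<Sum>k'\<in>V N P m. (X((m, k) := 1)) (m, k')) = 1" .
    have B: "(\<Sum>q\<in>set ms. \<Sum>k'\<in>V N P q. (X((m, k) := 1)) (q, k'))
        = (\<Sum>q\<in>set ms. \<Sum>k'\<in>V N P q. X (q, k'))"
      using m by (intro sum.cong) auto
    show ?thesis using A B m by (simp add: sched_obj_def)
  qed
  have key: "1 - p + a * p \<le> a"
  proof -
    have "0 \<le> (a - 1) * (1 - p)" using a1 p1 by simp
    thus ?thesis by (simp add: algebra_simps)
  qed
  have R: "R = 2 * a + real L * KL L / cm" by (simp add: R_def a_def)
  have "(\<Sum>q\<in>set (ms @ [m]). (\<alpha>(m := 1 - p)) q) + sum (f n') S
      \<le> R * sched_obj N P (set (ms @ [m])) (X((m, k) := 1))"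
    using Al S1 S2 S3 IH key Ob R by (simp add: distrib_left)
  then show ?case unfolding f_def n'_def p_def R_def .
next
  case (drop ms n \<alpha> X m)
  have L: "1 \<le> L" using drop.prems by simp
  have m: "m \<notin> set ms" and d: "distinct ms" using drop.prems by auto
  have a0: "\<alpha> m = 0" using inv_alpha0[OF drop.hyps(1) m] .
  have X0: "\<And>k'. X (m, k') = 0" using inv_X[OF drop.hyps(1)] m by blast
  have "sched_obj N P (set (ms @ [m])) X = sched_obj N P (set ms) X"
    using m X0 by (simp add: sched_obj_def)
  then show ?case using drop.IH[OF L d drop.prems(3-6)] drop.prems(7-9) a0 m by simp
qed

lemma weak_dual:
  assumes sf: "sched_feasible N P M 1 Y" and df: "dual_feasible N P M \<alpha> \<beta>"
    and fM: "finite M" and fS: "finite S" and sub: "\<forall>m\<in>M. \<forall>k\<in>V N P m. k \<subseteq> S"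
    and Sl: "\<forall>p\<in>S. fst p \<in> links N" and fV: "\<forall>m\<in>M. finite (V N P m)"
  shows "sched_obj N P M Y \<le> (\<Sum>m\<in>M. \<alpha> m) + (\<Sum>(l, t)\<in>S. real (cap N l) * \<beta> l t)"
proof -
  define b where "b = (\<lambda>p. \<beta> (fst p) (snd p))"
  have Y0: "\<And>m k. 0 \<le> Y (m, k)" using sf by (simp add: sched_feasible_def)
  have Y1: "\<And>m. m \<in> M \<Longrightarrow> (\<Sum>k\<in>V N P m. Y (m, k)) \<le> 1" using sf by (simp add: sched_feasible_def)
  have Ycap: "\<And>l t. l \<in> links N \<Longrightarrow> (\<Sum>m\<in>M. \<Sum>k\<in>{k \<in> V N P m. (l, t) \<in> k}. Y (m, k)) \<le> real (cap N l)"
    using sf by (simp add: sched_feasible_def)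
  have D1: "\<And>m k. m \<in> M \<Longrightarrow> k \<in> V N P m \<Longrightarrow> 1 \<le> \<alpha> m + sum b k"
    using df by (simp add: dual_feasible_def b_def case_prod_unfold)
  have a0: "\<And>m. m \<in> M \<Longrightarrow> 0 \<le> \<alpha> m" using df by (simp add: dual_feasible_def)
  have b0: "\<And>p. p \<in> S \<Longrightarrow> 0 \<le> b p" using df Sl by (auto simp: dual_feasible_def b_def)
  have "sched_obj N P M Y = (\<Sum>m\<in>M. \<Sum>k\<in>V N P m. Y (m, k))" by (simp add: sched_obj_def)
  also have "\<dots> \<le> (\<Sum>m\<in>M. \<Sum>k\<in>V N P m. Y (m, k) * \<alpha> m + Y (m, k) * sum b k)"
  proof (intro sum_mono)
    fix m k assume m: "m \<in> M" and k: "k \<in> V N P m"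
    have "Y (m, k) * 1 \<le> Y (m, k) * (\<alpha> m + sum b k)"
      using D1[OF m k] Y0 by (intro mult_left_mono) auto
    thus "Y (m, k) \<le> Y (m, k) * \<alpha> m + Y (m, k) * sum b k" by (simp add: distrib_left)
  qed
  also have "\<dots> = (\<Sum>m\<in>M. \<alpha> m * (\<Sum>k\<in>V N P m. Y (m, k))) + (\<Sum>m\<in>M. \<Sum>k\<in>V N P m. Y (m, k) * sum b k)"
    by (simp add: sum.distrib sum_distrib_left mult.commute)
  also have "(\<Sum>m\<in>M. \<alpha> m * (\<Sum>k\<in>V N P m. Y (m, k))) \<le> (\<Sum>m\<in>M. \<alpha> m)"
  proof (intro sum_mono)
    fix m assume m: "m \<in> M"
    show "\<alpha> m * (\<Sum>k\<in>V N P m. Y (m, k)) \<le> \<alpha> m"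
      using a0[OF m] Y1[OF m] by (simp add: mult_left_le)
  qed
  also have "(\<Sum>m\<in>M. \<Sum>k\<in>V N P m. Y (m, k) * sum b k)
      = (\<Sum>m\<in>M. \<Sum>k\<in>V N P m. \<Sum>p\<in>S. if p \<in> k then Y (m, k) * b p else 0)"
  proof (intro sum.cong refl)
    fix m k assume m: "m \<in> M" and k: "k \<in> V N P m"
    have "{p \<in> S. p \<in> k} = k" using sub m k by auto
    hence "(\<Sum>p\<in>S. if p \<in> k then Y (m, k) * b p else 0) = (\<Sum>p\<in>k. Y (m, k) * b p)"
      using sum.inter_filter[OF fS, of "\<lambda>p. Y (m, k) * b p" "\<lambda>p. p \<in> k"] by simp
    thus "Y (m, k) * sum b k = (\<Sum>p\<in>S. if p \<in> k then Y (m, k) * b p else 0)"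
      by (simp add: sum_distrib_left)
  qed
  also have "\<dots> = (\<Sum>p\<in>S. \<Sum>m\<in>M. \<Sum>k\<in>V N P m. if p \<in> k then Y (m, k) * b p else 0)"
  proof -
    have "(\<Sum>m\<in>M. \<Sum>k\<in>V N P m. \<Sum>p\<in>S. if p \<in> k then Y (m, k) * b p else 0)
        = (\<Sum>m\<in>M. \<Sum>p\<in>S. \<Sum>k\<in>V N P m. if p \<in> k then Y (m, k) * b p else 0)"
      by (intro sum.cong refl sum.swap)
    also have "\<dots> = (\<Sum>p\<in>S. \<Sum>m\<in>M. \<Sum>k\<in>V N P m. if p \<in> k then Y (m, k) * b p else 0)"
      by (rule sum.swap)
    finally show ?thesis .
  qed
  also have "\<dots> = (\<Sum>p\<in>S. b p * (\<Sum>m\<in>M. \<Sum>k\<in>{k \<in> V N P m. p \<in> k}. Y (m, k)))"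
  proof (intro sum.cong refl)
    fix p assume p: "p \<in> S"
    have "\<And>m. m \<in> M \<Longrightarrow> (\<Sum>k\<in>V N P m. if p \<in> k then Y (m, k) * b p else 0)
        = b p * (\<Sum>k\<in>{k \<in> V N P m. p \<in> k}. Y (m, k))"
      using fV by (simp add: sum.inter_filter sum_distrib_left mult.commute if_distrib cong: if_cong)
    thus "(\<Sum>m\<in>M. \<Sum>k\<in>V N P m. if p \<in> k then Y (m, k) * b p else 0)
        = b p * (\<Sum>m\<in>M. \<Sum>k\<in>{k \<in> V N P m. p \<in> k}. Y (m, k))"
      by (simp add: sum_distrib_left)
  qed
  also have "\<dots> \<le> (\<Sum>p\<in>S. b p * real (cap N (fst p)))"
  proof (intro sum_mono)
    fix p assume p: "p \<in> S"
    obtain l t where pe: "p = (l, t)" by (cases p)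
    show "b p * (\<Sum>m\<in>M. \<Sum>k\<in>{k \<in> V N P m. p \<in> k}. Y (m, k)) \<le> b p * real (cap N (fst p))"
      using Ycap[of l t] Sl p pe b0[OF p] by (intro mult_left_mono) auto
  qed
  also have "(\<Sum>p\<in>S. b p * real (cap N (fst p))) = (\<Sum>(l, t)\<in>S. real (cap N l) * \<beta> l t)"
    by (simp add: b_def case_prod_unfold mult.commute)
  finally show ?thesis by simp
qed

theorem theorem3:
  fixes L :: nat
  assumes "1 \<le> L"
  shows "\<exists>B::real. \<forall>(N::net) (P::pkts) (ms::nat list) n \<alpha> X.
           finite (links N) \<and> links N \<noteq> {} \<and> (\<forall>l\<in>links N. 1 \<le> cap N l) \<and>
           distinct ms \<and> sorted (map (arr P) ms) \<and> (\<forall>m\<in>set ms. 1 \<le> arr P m) \<and>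
           (\<forall>m\<in>set ms. \<forall>k\<in>V N P m. card k \<le> L) \<and>
           alg3 N P L ms n \<alpha> X
           \<longrightarrow> sched_feasible N P (set ms) 1 X \<and>
               dual_feasible N P (set ms) \<alpha> (beta_of N L n) \<and>
               Gamma_opt N P (set ms)
                 \<le> (2 * (1 + ln (real L)) + B / real (Cmin N)) * sched_obj N P (set ms) X"
proof (intro exI[of _ "real L * KL L"] allI impI)
  fix N :: net and P :: pkts and ms :: "nat list" and n \<alpha> X
  assume H: "finite (links N) \<and> links N \<noteq> {} \<and> (\<forall>l\<in>links N. 1 \<le> cap N l) \<and>
           distinct ms \<and> sorted (map (arr P) ms) \<and> (\<forall>m\<in>set ms. 1 \<le> arr P m) \<and>
           (\<forall>m\<in>set ms. \<forall>k\<in>V N P m. card k \<le> L) \<and>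
           alg3 N P L ms n \<alpha> X"
  have L: "1 \<le> L" using assms .
  have fl: "finite (links N)" and ne: "links N \<noteq> {}" and c1: "\<forall>l\<in>links N. 1 \<le> cap N l"
    and d: "distinct ms" and ck: "\<forall>m\<in>set ms. \<forall>k\<in>V N P m. card k \<le> L"
    and A: "alg3 N P L ms n \<alpha> X" using H by auto
  have cminin: "Cmin N \<in> cap N ` links N" unfolding Cmin_def using fl ne by (intro Min_in) auto
  have cm1: "1 \<le> Cmin N" using cminin c1 by auto
  have cmle: "\<forall>l\<in>links N. real (Cmin N) \<le> real (cap N l)"
    unfolding Cmin_def using fl by auto
  have cmp: "0 < real (Cmin N)" using cm1 by simp
  have s1: "\<forall>m k. X (m, k) \<noteq> 0 \<longrightarrow> m \<in> set ms \<and> k \<in> V N P m"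
    using inv_X[OF A] by metis
  have s2: "\<forall>m k. 0 \<le> X (m, k)" using inv_X[OF A] by (metis order_refl zero_le_one)
  have s3: "\<forall>m\<in>set ms. (\<Sum>k\<in>V N P m. X (m, k)) \<le> 1" using inv_sum1[OF A d fl] by blast
  have s4: "\<forall>l\<in>links N. \<forall>t. (\<Sum>m\<in>set ms. \<Sum>k\<in>{k \<in> V N P m. (l, t) \<in> k}. X (m, k)) \<le> 1 * real (cap N l)"
  proof (intro ballI allI)
    fix l t assume l: "l \<in> links N"
    have "(\<Sum>m\<in>set ms. \<Sum>k\<in>{k \<in> V N P m. (l, t) \<in> k}. X (m, k)) = real (n l t)"
      using inv_n[OF A d fl] by simp
    also have "\<dots> \<le> real (cap N l)" using inv_cap[OF A L c1 l] by simp
    finally show "(\<Sum>m\<in>set ms. \<Sum>k\<in>{k \<in> V N P m. (l, t) \<in> k}. X (m, k)) \<le> 1 * real (cap N l)"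
      by simp
  qed
  have SF: "sched_feasible N P (set ms) 1 X"
    unfolding sched_feasible_def using s1 s2 s3 s4 by blast
  have DF: "dual_feasible N P (set ms) \<alpha> (beta_of N L n)"
    using inv_dual[OF A L d] beta_nonneg[OF L]
    unfolding dual_feasible_def price_def by auto
  define S where "S = (\<Union>q\<in>set ms. \<Union>(V N P q))"
  have fS: "finite S" unfolding S_def
    using V_finite[OF fl] V_elem_finite by blast
  have subS: "\<forall>q\<in>set ms. \<forall>k\<in>V N P q. k \<subseteq> S" unfolding S_def by blast
  have Sl: "\<forall>p\<in>S. fst p \<in> links N" unfolding S_def using V_sub by fastforce
  have pot: "(\<Sum>q\<in>set ms. \<alpha> q) + (\<Sum>(l, t)\<in>S. real (cap N l) * beta_of N L n l t)
      \<le> (2 * (1 + ln (real L)) + real L * KL L / real (Cmin N)) * sched_obj N P (set ms) X"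
    using inv_pot[OF A L d fl c1 cmp cmle ck fS subS] .
  have "Gamma_opt N P (set ms)
      \<le> (\<Sum>q\<in>set ms. \<alpha> q) + (\<Sum>(l, t)\<in>S. real (cap N l) * beta_of N L n l t)"
    unfolding Gamma_opt_def
  proof (rule cSup_least)
    have "sched_feasible N P (set ms) 1 (\<lambda>_. 0)" by (simp add: sched_feasible_def)
    thus "sched_obj N P (set ms) ` {X. sched_feasible N P (set ms) 1 X} \<noteq> {}" by blast
  next
    fix x assume "x \<in> sched_obj N P (set ms) ` {X. sched_feasible N P (set ms) 1 X}"
    then obtain Y where Y: "sched_feasible N P (set ms) 1 Y" and x: "x = sched_obj N P (set ms) Y"
      by blast
    show "x \<le> (\<Sum>q\<in>set ms. \<alpha> q) + (\<Sum>(l, t)\<in>S. real (cap N l) * beta_of N L n l t)"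
      using weak_dual[OF Y DF _ fS subS Sl] V_finite[OF fl] x by simp
  qed
  also note pot
  finally show "sched_feasible N P (set ms) 1 X \<and>
               dual_feasible N P (set ms) \<alpha> (beta_of N L n) \<and>
               Gamma_opt N P (set ms)
                 \<le> (2 * (1 + ln (real L)) + real L * KL L / real (Cmin N)) * sched_obj N P (set ms) X"
    using SF DF by simp
qed

end
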